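(* For each $t$, \[ \mathbb{E}\Big[\sum_{n<t}\bar L_n(x_n,y_n)-\min_{x\in\mathcal{X}}\max_{y\in\mathcal{Y}}\sum_{n<t}\bar L_n(x,y)\Big]\le G\sum_{n<t}\Big(\mathbb{E}\|x_n-x_{n+1}\|_1+\mathbb{E}\|y_n-y_{n+1}\|_1+\mathbb{E}\|y''_n-y_{n+1}\|_1\Big)+2T^{2/3}(\log d+1)x_{\max}, \] and \[ \mathbb{E}\Big[\min_{x\in\mathcal{X}}\max_{y\in\mathcal{Y}}\sum_{n<t}\bar L_n(x,y)-\sum_{n<t}\bar L_n(x_n,y_n)\Big]\le G\sum_{n<t}\Big(2\,\mathbb{E}\|x_n-x_{n+1}\|_1+\mathbb{E}\|y_n-y_{n+1}\|_1+\mathbb{E}\|y'_n-y_{n+1}\|_1\Big)+2T^{2/3}(\log d+1)x_{\max}. \]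
   Context: Let $\mathcal{X}\subseteq\mathbb{R}^d$ be compact, $x_{\max}:=\max_{x\in\mathcal{X}}\|x\|_1$. For $t=1,\dots,T$, $f_t,c_{it}:\mathcal{X}\to\mathbb{R}$ ($i=1,\dots,I$) are $G_0$-Lipschitz w.r.t. $\ell_1$, $b_i\ge0$, and for $y=(\gamma_1,\dots,\gamma_I)$, $L_t(x,y)=f_t(x)+\sum_i\gamma_i[c_{it}(x)-b_i]$. Fix $\lambda>0$, $y_{\max}>0$, $\mathcal{Y}=[0,y_{\max}]^I$, and $\bar L_n(x,y)=L_n(x,y)+\frac{\lambda}{n^{1/9}}\sum_i\log(\gamma_i+1)$. $G>0$ is a constant such that for all $n$, $\bar L_n$ is $G$-Lipschitz in $x$ (for fixed $y\in\mathcal{Y}$) and in $y$ (for fixed $x\in\mathcal{X}$) with respect to $\ell_1$-norms. A global minimax point of $h$ on $\mathcal{X}\times\mathcal{Y}$ is $(x^*,y^* )$ with $h(x^*,y)\le h(x^*,y^* )\le\max_{y'\in\mathcal{Y}}h(x,y')$ for all $x,y$. Algorithm (FTDPL with $M=1$): $\eta=T^{-2/3}$; at each period $t$, draw $\theta_t\in\mathbb{R}^d$ with i.i.d. coordinates exponentially distributed with parameter $\eta$, independent across $t$, and let $(x_t,y_t)$ be a global minimax point of $(x,y)\mapsto\sum_{n<t}\bar L_n(x,y)-\theta_t^\top x$ on $\mathcal{X}\times\mathcal{Y}$. Define $y'_t=\arg\max_{y\in\mathcal{Y}}\{\sum_{n<t+1}\bar L_n(x_t,y)-\theta_{t+1}^\top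 x_t\}$ and $y''_t=\arg\max_{y\in\mathcal{Y}}\{\sum_{n<t}\bar L_n(x_{t+1},y)-\theta_t^\top x_{t+1}\}$. Expectations are over the $\theta$'s. *)

theory Defs
  imports "HOL-Analysis.Analysis" "HOL-Probability.Probability"
begin

definition l1 :: "real ^ 'n \<Rightarrow> real" where
  "l1 x = (\<Sum>j\<in>UNIV. \<bar>x $ j\<bar>)"

definition l1_lipschitz_on :: "real \<Rightarrow> (real ^ 'n) set \<Rightarrow> (real ^ 'n \<Rightarrow> real) \<Rightarrow> bool" where
  "l1_lipschitz_on G S h \<longleftrightarrow> (\<forall>u\<in>S. \<forall>v\<in>S. \<bar>h u - h v\<bar> \<le> G * l1 (u - v))"

definition Ybox :: "real \<Rightarrow> (real ^ 'i) set" where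
  "Ybox ymax = {y. \<forall>i. 0 \<le> y $ i \<and> y $ i \<le> ymax}"

definition Lbar :: "(nat \<Rightarrow> real ^ 'd \<Rightarrow> real) \<Rightarrow> (nat \<Rightarrow> 'i::finite \<Rightarrow> real ^ 'd \<Rightarrow> real)
    \<Rightarrow> ('i \<Rightarrow> real) \<Rightarrow> real \<Rightarrow> nat \<Rightarrow> real ^ 'd \<Rightarrow> real ^ 'i \<Rightarrow> real" where
  "Lbar f c b lam n x y =
     f n x + (\<Sum>i\<in>UNIV. y $ i * (c n i x - b i))
     + lam / (real n powr (1/9)) * (\<Sum>i\<in>UNIV. ln (y $ i + 1))"

definition global_minimax_point ::
    "('a \<Rightarrow> 'b \<Rightarrow> real) \<Rightarrow> 'a set \<Rightarrow> 'b set \<Rightarrow> 'a \<Rightarrow> 'b \<Rightarrow> bool" where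
  "global_minimax_point h X Y x y \<longleftrightarrow> x \<in> X \<and> y \<in> Y \<and>
     (\<forall>x'\<in>X. \<forall>y'\<in>Y. h x y' \<le> h x y \<and> h x y \<le> (SUP y''\<in>Y. h x' y''))"

text \<open>min over X of max over Y (written with Inf/Sup; attained for compact sets
      and continuous functions).\<close>
definition minmax :: "('a \<Rightarrow> 'b \<Rightarrow> real) \<Rightarrow> 'a set \<Rightarrow> 'b set \<Rightarrow> real" where
  "minmax h X Y = (INF x\<in>X. SUP y\<in>Y. h x y)"

definition is_argmax_on :: "('b \<Rightarrow> real) \<Rightarrow> 'b set \<Rightarrow> 'b \<Rightarrow> bool" where
  "is_argmax_on g Y y \<longleftrightarrow> y \<in> Y \<and> (\<forall>y'\<in>Y. g y' \<le> g y)"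

end

theory Submission
  imports Defs
begin



lemma SUP_eq_max_at:
  fixes h :: "'b \<Rightarrow> real"
  assumes "z \<in> Y" "\<And>y. y \<in> Y \<Longrightarrow> h y \<le> h z"
  shows "(SUP y\<in>Y. h y) = h z"
  using assms by (intro cSup_eq_maximum) auto

lemma SUP_abs_bound:
  fixes h :: "'b \<Rightarrow> real"
  assumes "Y \<noteq> {}" "\<And>y. y \<in> Y \<Longrightarrow> \<bar>h y\<bar> \<le> B"
  shows "\<bar>(SUP y\<in>Y. h y)\<bar> \<le> B"
proof -
  obtain y0 where y0: "y0 \<in> Y" using assms by auto
  have bdd: "bdd_above (h ` Y)" using assms by (intro bdd_aboveI2[where M=B]) force
  have "(SUP y\<in>Y. h y) \<le> B" using assms by (intro cSUP_least) force+
  moreover have "h y0 \<le> (SUP y\<in>Y. h y)" using y0 bdd by (rule cSUP_upper)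
  moreover have "-B \<le> h y0" using assms(2)[OF y0] by auto
  ultimately show ?thesis by auto
qed

lemma INF_abs_bound:
  fixes h :: "'b \<Rightarrow> real"
  assumes "Y \<noteq> {}" "\<And>y. y \<in> Y \<Longrightarrow> \<bar>h y\<bar> \<le> B"
  shows "\<bar>(INF y\<in>Y. h y)\<bar> \<le> B"
proof -
  obtain y0 where y0: "y0 \<in> Y" using assms by auto
  have bdd: "bdd_below (h ` Y)" using assms by (intro bdd_belowI2[where m="-B"]) force
  have "-B \<le> (INF y\<in>Y. h y)" using assms by (intro cINF_greatest) force+
  moreover have "(INF y\<in>Y. h y) \<le> h y0" using bdd y0 by (rule cINF_lower)
  moreover have "h y0 \<le> B" using assms(2)[OF y0] by auto
  ultimately show ?thesis by auto
qed

lemma SUP_le_shift: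
  fixes h g :: "'b \<Rightarrow> real"
  assumes "Y \<noteq> {}" "\<And>y. y \<in> Y \<Longrightarrow> \<bar>g y\<bar> \<le> B" "\<And>y. y \<in> Y \<Longrightarrow> h y \<le> g y + c"
  shows "(SUP y\<in>Y. h y) \<le> (SUP y\<in>Y. g y) + c"
proof -
  have bdd: "bdd_above (g ` Y)" using assms by (intro bdd_aboveI2[where M=B]) force
  show ?thesis
  proof (intro cSUP_least assms(1))
    fix y assume y: "y \<in> Y"
    have "g y \<le> (SUP y\<in>Y. g y)" using y bdd by (rule cSUP_upper)
    then show "h y \<le> (SUP y\<in>Y. g y) + c" using assms(3)[OF y] by auto
  qed
qed

lemma INF_le_shift:
  fixes h g :: "'b \<Rightarrow> real"
  assumes "Y \<noteq> {}" "\<And>y. y \<in> Y \<Longrightarrow> \<bar>h y\<bar> \<le> B" "\<And>y. y \<in> Y \<Longrightarrow> h y \<le> g y + c"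
  shows "(INF y\<in>Y. h y) \<le> (INF y\<in>Y. g y) + c"
proof -
  have bdd: "bdd_below (h ` Y)" using assms by (intro bdd_belowI2[where m="-B"]) force
  have "(INF y\<in>Y. h y) - c \<le> (INF y\<in>Y. g y)"
  proof (intro cINF_greatest assms(1))
    fix y assume y: "y \<in> Y"
    have "(INF y\<in>Y. h y) \<le> h y" using bdd y by (rule cINF_lower)
    then show "(INF y\<in>Y. h y) - c \<le> g y" using assms(3)[OF y] by auto
  qed
  then show ?thesis by auto
qed

lemma minmax_abs_bound:
  fixes h :: "'a \<Rightarrow> 'b \<Rightarrow> real"
  assumes "X \<noteq> {}" "Y \<noteq> {}" "\<And>x y. x \<in> X \<Longrightarrow> y \<in> Y \<Longrightarrow> \<bar>h x y\<bar> \<le> B"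
  shows "\<bar>minmax h X Y\<bar> \<le> B"
  unfolding minmax_def using assms by (intro INF_abs_bound SUP_abs_bound) auto

lemma minmax_le_shift:
  fixes h g :: "'a \<Rightarrow> 'b \<Rightarrow> real"
  assumes "X \<noteq> {}" "Y \<noteq> {}" "\<And>x y. x \<in> X \<Longrightarrow> y \<in> Y \<Longrightarrow> \<bar>h x y\<bar> \<le> B"
    "\<And>x y. x \<in> X \<Longrightarrow> y \<in> Y \<Longrightarrow> \<bar>g x y\<bar> \<le> B"
    "\<And>x y. x \<in> X \<Longrightarrow> y \<in> Y \<Longrightarrow> h x y \<le> g x y + c"
  shows "minmax h X Y \<le> minmax g X Y + c"
  unfolding minmax_def
proof (rule INF_le_shift[where B=B])
  show "X \<noteq> {}" by fact
  fix x assume x: "x \<in> X"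
  show "\<bar>SUP y\<in>Y. h x y\<bar> \<le> B" using assms x by (intro SUP_abs_bound) auto
  show "(SUP y\<in>Y. h x y) \<le> (SUP y\<in>Y. g x y) + c"
    using assms x by (intro SUP_le_shift[where B=B]) auto
qed

lemma minmax_diff_bound:
  fixes h g :: "'a \<Rightarrow> 'b \<Rightarrow> real"
  assumes "X \<noteq> {}" "Y \<noteq> {}" "\<And>x y. x \<in> X \<Longrightarrow> y \<in> Y \<Longrightarrow> \<bar>h x y\<bar> \<le> B"
    "\<And>x y. x \<in> X \<Longrightarrow> y \<in> Y \<Longrightarrow> \<bar>g x y\<bar> \<le> B"
    "\<And>x y. x \<in> X \<Longrightarrow> y \<in> Y \<Longrightarrow> \<bar>h x y - g x y\<bar> \<le> c"
  shows "\<bar>minmax h X Y - minmax g X Y\<bar> \<le> c"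
proof -
  have 1: "h x y \<le> g x y + c" "g x y \<le> h x y + c" if "x \<in> X" "y \<in> Y" for x y
    using assms(5)[OF that] by auto
  have "minmax h X Y \<le> minmax g X Y + c"
    using assms 1 by (intro minmax_le_shift[where B=B]) auto
  moreover have "minmax g X Y \<le> minmax h X Y + c"
    using assms 1 by (intro minmax_le_shift[where B=B]) auto
  ultimately show ?thesis by auto
qed

lemma minmax_le_SUP:
  fixes h :: "'a \<Rightarrow> 'b \<Rightarrow> real"
  assumes "Y \<noteq> {}" "\<And>x y. x \<in> X \<Longrightarrow> y \<in> Y \<Longrightarrow> \<bar>h x y\<bar> \<le> B" "x \<in> X"
  shows "minmax h X Y \<le> (SUP y\<in>Y. h x y)"
  unfolding minmax_def
proof (rule cINF_lower[OF _ assms(3)])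
  show "bdd_below ((\<lambda>x. SUP y\<in>Y. h x y) ` X)"
  proof (intro bdd_belowI2[where m="-B"])
    fix x assume "x \<in> X"
    then have "\<bar>SUP y\<in>Y. h x y\<bar> \<le> B" using assms by (intro SUP_abs_bound) auto
    then show "-B \<le> (SUP y\<in>Y. h x y)" by auto
  qed
qed

lemma minmax_at_point:
  fixes h :: "'a \<Rightarrow> 'b \<Rightarrow> real"
  assumes "global_minimax_point h X Y x y"
  shows "minmax h X Y = h x y"
proof -
  have x: "x \<in> X" and y: "y \<in> Y" and H: "\<And>x' y'. x' \<in> X \<Longrightarrow> y' \<in> Y \<Longrightarrow> h x y' \<le> h x y \<and> h x y \<le> (SUP y''\<in>Y. h x' y'')"
    using assms unfolding global_minimax_point_def by auto
  have S: "(SUP y'\<in>Y. h x y') = h x y" using y H x by (intro SUP_eq_max_at) auto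
  show ?thesis unfolding minmax_def
  proof (rule cInf_eq_minimum)
    show "h x y \<in> (\<lambda>x. SUP y'\<in>Y. h x y') ` X" using x S by (metis image_eqI)
  qed (use S H y in auto)
qed



lemma l1_nonneg: "0 \<le> l1 x" unfolding l1_def by (auto intro: sum_nonneg)

lemma l1_commute: "l1 (u - v) = l1 (v - u)"
  unfolding l1_def by (intro sum.cong) auto

lemma l1_triangle: "l1 (a - c) \<le> l1 (a - b) + l1 (b - c)"
  unfolding l1_def sum.distrib[symmetric] by (intro sum_mono) auto

lemma l1_add: "l1 (a + b) \<le> l1 a + l1 b"
  unfolding l1_def sum.distrib[symmetric] by (intro sum_mono) (auto simp: abs_triangle_ineq)

lemma l1_le_norm: "l1 (x :: real ^ 'n) \<le> real CARD('n) * norm x"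
proof -
  have "l1 x \<le> (\<Sum>j\<in>(UNIV::'n set). norm x)" unfolding l1_def by (intro sum_mono component_le_norm_cart)
  then show ?thesis by simp
qed

lemma comp_le_l1: "\<bar>x $ j\<bar> \<le> l1 x"
  unfolding l1_def by (rule member_le_sum) auto

lemma inner_le_N:
  fixes v x :: "real ^ 'n"
  assumes a: "0 \<le> a"
  shows "\<bar>inner v x\<bar> \<le> (a + (\<Sum>j\<in>UNIV. max (\<bar>v $ j\<bar> - a) 0)) * l1 x"
proof -
  have "\<bar>inner v x\<bar> \<le> (\<Sum>j\<in>UNIV. \<bar>v $ j\<bar> * \<bar>x $ j\<bar>)"
    unfolding inner_vec_def by (rule order_trans[OF sum_abs]) (simp add: abs_mult)
  also have "\<dots> \<le> (\<Sum>j\<in>UNIV. (a + (\<Sum>k\<in>UNIV. max (\<bar>v $ k\<bar> - a) 0)) * \<bar>x $ j\<bar>)"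
  proof (intro sum_mono mult_right_mono)
    fix j
    have "max (\<bar>v $ j\<bar> - a) 0 \<le> (\<Sum>k\<in>UNIV. max (\<bar>v $ k\<bar> - a) 0)"
      by (rule member_le_sum) auto
    then show "\<bar>v $ j\<bar> \<le> a + (\<Sum>k\<in>UNIV. max (\<bar>v $ k\<bar> - a) 0)" by linarith
  qed auto
  finally show ?thesis unfolding l1_def by (simp add: sum_distrib_left)
qed

lemma inner_le_sumabs:
  fixes v x :: "real ^ 'n"
  shows "\<bar>inner v x\<bar> \<le> (\<Sum>j\<in>UNIV. \<bar>v $ j\<bar>) * l1 x"
  using inner_le_N[of 0 v x] by simp


lemma vec_borel_measurable:
  fixes F :: "'a \<Rightarrow> real ^ 'n"
  assumes "\<And>j. (\<lambda>\<omega>. F \<omega> $ j) \<in> borel_measurable N"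
  shows "F \<in> borel_measurable N"
proof -
  have "(\<lambda>\<omega>. \<Sum>j\<in>UNIV. F \<omega> $ j *\<^sub>R (axis j 1 :: real ^ 'n)) \<in> borel_measurable N"
    by (intro borel_measurable_sum borel_measurable_scaleR assms measurable_const) auto
  moreover have "(\<lambda>\<omega>. \<Sum>j\<in>UNIV. F \<omega> $ j *\<^sub>R (axis j 1 :: real ^ 'n)) = F"
  proof
    fix \<omega>
    show "(\<Sum>j\<in>UNIV. F \<omega> $ j *\<^sub>R (axis j 1 :: real ^ 'n)) = F \<omega>"
      by (rule vec_eq_iff[THEN iffD2]) (simp add: sum_component axis_def if_distrib cong: if_cong)
  qed
  ultimately show ?thesis by simp
qed
lemma l1_measurable[measurable]: "(l1 :: real ^ 'n \<Rightarrow> real) \<in> borel_measurable borel"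
proof -
  have "(\<lambda>x::real^'n. \<Sum>j\<in>UNIV. \<bar>x $ j\<bar>) \<in> borel_measurable borel"
    by (intro borel_measurable_sum borel_measurable_abs borel_measurable_nth)
  then show ?thesis by (simp add: l1_def[abs_def])
qed

lemma vec_lambda_measurable:
  "(vec_lambda :: ('n::finite \<Rightarrow> real) \<Rightarrow> real ^ 'n) \<in> borel_measurable (Pi\<^sub>M UNIV (\<lambda>_. borel))"
  proof (rule vec_borel_measurable)
  fix j show "(\<lambda>\<omega>. vec_lambda \<omega> $ j) \<in> borel_measurable (Pi\<^sub>M UNIV (\<lambda>_. borel))"
    unfolding vec_lambda_beta by (rule measurable_component_singleton) simp
qed

lemma exp_shift_integral:
  fixes l a :: real and X :: "'w \<Rightarrow> real"
  assumes P: "prob_space M" and l: "0 < l" and a: "0 \<le> a"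
    and D: "distributed M lborel X (exponential_density l)"
  shows "integrable M (\<lambda>\<omega>. max (\<bar>X \<omega>\<bar> - a) 0)"
    "(\<integral>\<omega>. max (\<bar>X \<omega>\<bar> - a) 0 \<partial>M) = exp (- a * l) / l"
proof -
  interpret prob_space M by (rule P)
  have iX: "integrable M X" using erlang_ith_moment_integrable[OF l D, of 1] by simp
  have mX: "X \<in> borel_measurable M" using D by (simp add: distributed_def)
  show "integrable M (\<lambda>\<omega>. max (\<bar>X \<omega>\<bar> - a) 0)"
    by (rule Bochner_Integration.integrable_bound[OF integrable_abs[OF iX]]) (use mX a in auto)
  have dens: "\<And>x. 0 \<le> exponential_density l x" using l by (auto simp: exponential_density_def)
  have "(\<integral>\<omega>. max (\<bar>X \<omega>\<bar> - a) 0 \<partial>M) = (\<integral>x. exponential_density l x * max (\<bar>x\<bar> - a) 0 \<partial>lborel)"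
    by (rule distributed_integral[OF D, symmetric]) (auto simp: dens)
  also have "\<dots> = (\<integral>x. exponential_density l (a + 1 * x) * max (\<bar>a + 1 * x\<bar> - a) 0 \<partial>lborel)"
    using lborel_integral_real_affine[of 1 "\<lambda>x. exponential_density l x * max (\<bar>x\<bar> - a) 0" a] by simp
  also have "\<dots> = (\<integral>x. exp (- a * l) * (exponential_density l x * x) \<partial>lborel)"
  proof (intro Bochner_Integration.integral_cong refl)
    fix x :: real
    show "exponential_density l (a + 1 * x) * max (\<bar>a + 1 * x\<bar> - a) 0 = exp (- a * l) * (exponential_density l x * x)"
    proof (cases "x < 0")
      case True
      then show ?thesis using a by (auto simp: exponential_density_def max_def)
    next
      case False
      then have x0: "0 \<le> x" by simp
      have e: "exp ((- a - x) * l) = exp (- (a * l)) * exp (- (x * l))"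
        by (subst exp_add[symmetric]) (simp add: algebra_simps)
        

      have "exponential_density l (a + 1 * x) * max (\<bar>a + 1 * x\<bar> - a) 0 = l * exp (- (a + x) * l) * x"
        using a x0 by (simp add: exponential_density_def)
      also have "\<dots> = exp (- a * l) * (exponential_density l x * x)"
        using x0 by (simp add: exponential_density_def e)
      finally show ?thesis .
    qed
  qed
  also have "\<dots> = exp (- a * l) * (\<integral>x. exponential_density l x * x \<partial>lborel)" by simp
  also have "(\<integral>x. exponential_density l x * x \<partial>lborel) = expectation X"
    by (rule distributed_integral[OF D]) (auto simp: dens)
  also have "expectation X = 1 / l" by (rule exponential_distributed_expectation[OF l D])
  finally show "(\<integral>\<omega>. max (\<bar>X \<omega>\<bar> - a) 0 \<partial>M) = exp (- a * l) / l" by simp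
qed



lemma theta_distr:
  fixes \<theta> :: "nat \<Rightarrow> 'w \<Rightarrow> real ^ 'd" and l :: real
  assumes P: "prob_space M" and l: "0 < l"
    and ex: "\<And>s j. s \<ge> 1 \<Longrightarrow> distributed M lborel (\<lambda>\<omega>. \<theta> s \<omega> $ j) (exponential_density l)"
    and ind: "prob_space.indep_vars M (\<lambda>_. borel) (\<lambda>p \<omega>. \<theta> (fst p) \<omega> $ snd p) ({1..} \<times> UNIV)"
    and r: "r \<ge> 1"
  shows "distr M (Pi\<^sub>M UNIV (\<lambda>_. borel)) (\<lambda>\<omega>. \<lambda>j\<in>UNIV. \<theta> r \<omega> $ j)
       = Pi\<^sub>M (UNIV :: 'd set) (\<lambda>_. density lborel (exponential_density l))"
proof -
  interpret prob_space M by (rule P)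
  define I where "I = {r} \<times> (UNIV :: 'd set)"
  define Ex where "Ex = density lborel (exponential_density l)"
  have sEx: "sets Ex = sets borel" by (simp add: Ex_def)
  have pEx: "prob_space Ex" unfolding Ex_def by (rule prob_space_exponential_density[OF l])
  have meas: "(\<lambda>\<omega>. \<theta> s \<omega> $ j) \<in> borel_measurable M" if "s \<ge> 1" for s j
    using ex[OF that, of j] by (simp add: distributed_def)
  have ind': "indep_vars (\<lambda>_. borel) (\<lambda>p \<omega>. \<theta> (fst p) \<omega> $ snd p) I"
    by (rule indep_vars_subset[OF ind]) (use r in \<open>auto simp: I_def\<close>)
  have rv: "random_variable borel (\<lambda>\<omega>. \<theta> (fst p) \<omega> $ snd p)" if "p \<in> I" for p
    using that r meas by (auto simp: I_def)
  have E1: "distr M (Pi\<^sub>M I (\<lambda>_. borel)) (\<lambda>\<omega>. \<lambda>p\<in>I. \<theta> (fst p) \<omega> $ snd p)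
      = (Pi\<^sub>M I (\<lambda>p. distr M borel (\<lambda>\<omega>. \<theta> (fst p) \<omega> $ snd p)))"
    using indep_vars_iff_distr_eq_PiM'[where I=I and M'="\<lambda>_. borel" and X="\<lambda>p \<omega>. \<theta> (fst p) \<omega> $ snd p"] ind' rv
    by (auto simp: I_def)
  have E2: "(Pi\<^sub>M I (\<lambda>p. distr M borel (\<lambda>\<omega>. \<theta> (fst p) \<omega> $ snd p))) = Pi\<^sub>M I (\<lambda>_. Ex)"
  proof (rule PiM_cong[OF refl])
    fix p assume p: "p \<in> I"
    have "distr M borel (\<lambda>\<omega>. \<theta> (fst p) \<omega> $ snd p) = distr M lborel (\<lambda>\<omega>. \<theta> (fst p) \<omega> $ snd p)"
      by (rule distr_cong) auto
    also have "\<dots> = Ex" using ex[of "fst p" "snd p"] p r by (auto simp: I_def Ex_def distributed_def)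
    finally show "distr M borel (\<lambda>\<omega>. \<theta> (fst p) \<omega> $ snd p) = Ex" .
  qed
  define R where "R = (\<lambda>g::nat \<times> 'd \<Rightarrow> real. \<lambda>j\<in>(UNIV::'d set). g (r, j))"
  have mR: "R \<in> measurable (Pi\<^sub>M I (\<lambda>_. borel)) (Pi\<^sub>M UNIV (\<lambda>_. borel))"
    unfolding R_def by (intro measurable_restrict measurable_component_singleton) (auto simp: I_def)
  have mT: "(\<lambda>\<omega>. \<lambda>p\<in>I. \<theta> (fst p) \<omega> $ snd p) \<in> measurable M (Pi\<^sub>M I (\<lambda>_. borel))"
    by (intro measurable_restrict rv)
  have "distr M (Pi\<^sub>M UNIV (\<lambda>_. borel)) (\<lambda>\<omega>. \<lambda>j\<in>UNIV. \<theta> r \<omega> $ j)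
      = distr M (Pi\<^sub>M UNIV (\<lambda>_. borel)) (R \<circ> (\<lambda>\<omega>. \<lambda>p\<in>I. \<theta> (fst p) \<omega> $ snd p))"
    by (rule distr_cong) (auto simp: R_def I_def)
  also have "\<dots> = distr (distr M (Pi\<^sub>M I (\<lambda>_. borel)) (\<lambda>\<omega>. \<lambda>p\<in>I. \<theta> (fst p) \<omega> $ snd p)) (Pi\<^sub>M UNIV (\<lambda>_. borel)) R"
    by (rule distr_distr[OF mR mT, symmetric])
  also have "\<dots> = distr (Pi\<^sub>M I (\<lambda>_. Ex)) (Pi\<^sub>M UNIV (\<lambda>_. Ex)) R"
    unfolding E1 E2 by (rule distr_cong) (auto intro!: sets_PiM_cong simp: sEx)
  also have "\<dots> = Pi\<^sub>M UNIV (\<lambda>_. Ex)"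
    unfolding R_def
    using distr_PiM_reindex[of I "\<lambda>_. Ex" "\<lambda>j. (r, j)" UNIV] pEx
    by (auto simp: I_def inj_on_def)
  finally show ?thesis unfolding Ex_def .
qed

lemma theta_integral:
  fixes \<theta> :: "nat \<Rightarrow> 'w \<Rightarrow> real ^ 'd" and l :: real and W :: "real ^ 'd \<Rightarrow> real"
  assumes P: "prob_space M" and l: "0 < l"
    and ex: "\<And>s j. s \<ge> 1 \<Longrightarrow> distributed M lborel (\<lambda>\<omega>. \<theta> s \<omega> $ j) (exponential_density l)"
    and ind: "prob_space.indep_vars M (\<lambda>_. borel) (\<lambda>p \<omega>. \<theta> (fst p) \<omega> $ snd p) ({1..} \<times> UNIV)"
    and r: "r \<ge> 1" and W: "W \<in> borel_measurable borel"
  shows "(\<integral>\<omega>. W (\<theta> r \<omega>) \<partial>M) = (\<integral>g. W (vec_lambda g) \<partial>(Pi\<^sub>M (UNIV :: 'd set) (\<lambda>_. density lborel (exponential_density l))))"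
proof -
  have meas: "(\<lambda>\<omega>. \<theta> r \<omega> $ j) \<in> borel_measurable M" for j
    using ex[OF r, of j] by (simp add: distributed_def)
  have mT: "(\<lambda>\<omega>. \<lambda>j\<in>UNIV. \<theta> r \<omega> $ j) \<in> measurable M (Pi\<^sub>M UNIV (\<lambda>_. borel))"
    by (intro measurable_restrict meas)
  have mW: "(\<lambda>g. W (vec_lambda g)) \<in> borel_measurable (Pi\<^sub>M (UNIV::'d set) (\<lambda>_. borel))"
    using measurable_comp[OF vec_lambda_measurable W] by (simp add: comp_def)
  have "(\<integral>\<omega>. W (\<theta> r \<omega>) \<partial>M) = (\<integral>\<omega>. W (vec_lambda (\<lambda>j\<in>UNIV. \<theta> r \<omega> $ j)) \<partial>M)"
    by (simp add: restrict_UNIV vec_nth_inverse)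
  also have "\<dots> = (\<integral>g. W (vec_lambda g) \<partial>distr M (Pi\<^sub>M UNIV (\<lambda>_. borel)) (\<lambda>\<omega>. \<lambda>j\<in>UNIV. \<theta> r \<omega> $ j))"
    by (rule integral_distr[OF mT mW, symmetric])
  also have "\<dots> = (\<integral>g. W (vec_lambda g) \<partial>(Pi\<^sub>M (UNIV :: 'd set) (\<lambda>_. density lborel (exponential_density l))))"
    by (subst theta_distr[OF P l ex ind r]) auto
  finally show ?thesis .
qed





lemma l1_diff_integrable:
  fixes U V :: "'w \<Rightarrow> real ^ 'k"
  assumes "finite_measure M" "U \<in> borel_measurable M" "V \<in> borel_measurable M"
    "\<And>\<omega>. \<omega> \<in> space M \<Longrightarrow> l1 (U \<omega> - V \<omega>) \<le> C"
  shows "integrable M (\<lambda>\<omega>. l1 (U \<omega> - V \<omega>))"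
proof -
  interpret finite_measure M by fact
  have m: "(\<lambda>\<omega>. l1 (U \<omega> - V \<omega>)) \<in> borel_measurable M"
    using measurable_compose[OF borel_measurable_diff[OF assms(2,3)] l1_measurable] .
  show ?thesis
  proof (rule integrable_const_bound[where B=C])
    show "AE x in M. norm (l1 (U x - V x)) \<le> C"
    proof (rule AE_I2)
      fix x assume "x \<in> space M"
      then show "norm (l1 (U x - V x)) \<le> C" using assms(4) l1_nonneg[of "U x - V x"] by simp
    qed
  qed (rule m)
qed

theorem lemma2:
  fixes M :: "'w measure"
    and X :: "(real ^ 'd) set"
    and f :: "nat \<Rightarrow> real ^ 'd \<Rightarrow> real"
    and c :: "nat \<Rightarrow> 'i::finite \<Rightarrow> real ^ 'd \<Rightarrow> real"
    and b :: "'i \<Rightarrow> real"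
    and lam ymax G0 G :: real
    and T t :: nat
    and \<theta> :: "nat \<Rightarrow> 'w \<Rightarrow> real ^ 'd"
    and xs :: "nat \<Rightarrow> 'w \<Rightarrow> real ^ 'd"
    and ys ys' ys'' :: "nat \<Rightarrow> 'w \<Rightarrow> real ^ 'i"
  defines "Y \<equiv> Ybox ymax"
    and "xmax \<equiv> (SUP x\<in>X. l1 x)"
    and "\<eta> \<equiv> real T powr (-2/3)"
    and "Lb \<equiv> Lbar f c b lam"
  assumes X_compact: "compact X" and X_ne: "X \<noteq> {}"
    and T_pos: "T \<ge> 1"
    and f_lip: "\<And>n. l1_lipschitz_on G0 X (f n)"
    and c_lip: "\<And>n i. l1_lipschitz_on G0 X (c n i)"
    and b_nonneg: "\<And>i. b i \<ge> 0"
    and lam_pos: "lam > 0" and ymax_pos: "ymax > 0"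
    and G_pos: "G > 0"
    and G_lip_x: "\<And>n y. n \<ge> 1 \<Longrightarrow> y \<in> Y \<Longrightarrow> l1_lipschitz_on G X (\<lambda>x. Lb n x y)"
    and G_lip_y: "\<And>n x. n \<ge> 1 \<Longrightarrow> x \<in> X \<Longrightarrow> l1_lipschitz_on G Y (\<lambda>y. Lb n x y)"
    and M_prob: "prob_space M"
    and \<theta>_exp: "\<And>s j. s \<ge> 1 \<Longrightarrow> distributed M lborel (\<lambda>\<omega>. \<theta> s \<omega> $ j) (exponential_density \<eta>)"
    and \<theta>_indep: "prob_space.indep_vars M (\<lambda>_. borel) (\<lambda>p \<omega>. \<theta> (fst p) \<omega> $ snd p) ({1..} \<times> UNIV)"
    and minimax: "\<And>s \<omega>. s \<ge> 1 \<Longrightarrow> \<omega> \<in> space M \<Longrightarrow>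
        global_minimax_point (\<lambda>x y. (\<Sum>n\<in>{1..<s}. Lb n x y) - inner (\<theta> s \<omega>) x) X Y (xs s \<omega>) (ys s \<omega>)"
    and ys'_def: "\<And>s \<omega>. s \<ge> 1 \<Longrightarrow> \<omega> \<in> space M \<Longrightarrow>
        is_argmax_on (\<lambda>y. (\<Sum>n\<in>{1..<s+1}. Lb n (xs s \<omega>) y) - inner (\<theta> (s+1) \<omega>) (xs s \<omega>)) Y (ys' s \<omega>)"
    and ys''_def: "\<And>s \<omega>. s \<ge> 1 \<Longrightarrow> \<omega> \<in> space M \<Longrightarrow>
        is_argmax_on (\<lambda>y. (\<Sum>n\<in>{1..<s}. Lb n (xs (s+1) \<omega>) y) - inner (\<theta> s \<omega>) (xs (s+1) \<omega>)) Y (ys'' s \<omega>)"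
    and meas: "\<And>s. s \<ge> 1 \<Longrightarrow> xs s \<in> borel_measurable M \<and> ys s \<in> borel_measurable M
        \<and> ys' s \<in> borel_measurable M \<and> ys'' s \<in> borel_measurable M"
    and t_pos: "t \<ge> 1"
  shows
    "(\<integral>\<omega>. (\<Sum>n\<in>{1..<t}. Lb n (xs n \<omega>) (ys n \<omega>)) - minmax (\<lambda>x y. \<Sum>n\<in>{1..<t}. Lb n x y) X Y \<partial>M)
       \<le> G * (\<Sum>n\<in>{1..<t}. (\<integral>\<omega>. l1 (xs n \<omega> - xs (n+1) \<omega>) \<partial>M)
                             + (\<integral>\<omega>. l1 (ys n \<omega> - ys (n+1) \<omega>) \<partial>M)
                             + (\<integral>\<omega>. l1 (ys'' n \<omega> - ys (n+1) \<omega>) \<partial>M))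
         + 2 * real T powr (2/3) * (ln (real CARD('d)) + 1) * xmax
     \<and> (\<integral>\<omega>. minmax (\<lambda>x y. \<Sum>n\<in>{1..<t}. Lb n x y) X Y - (\<Sum>n\<in>{1..<t}. Lb n (xs n \<omega>) (ys n \<omega>)) \<partial>M)
       \<le> G * (\<Sum>n\<in>{1..<t}. 2 * (\<integral>\<omega>. l1 (xs n \<omega> - xs (n+1) \<omega>) \<partial>M)
                             + (\<integral>\<omega>. l1 (ys n \<omega> - ys (n+1) \<omega>) \<partial>M)
                             + (\<integral>\<omega>. l1 (ys' n \<omega> - ys (n+1) \<omega>) \<partial>M))
         + 2 * real T powr (2/3) * (ln (real CARD('d)) + 1) * xmax"
proof -
  interpret prob_space M by (rule M_prob)
  have eta_pos: "0 < \<eta>" unfolding \<eta>_def using T_pos by simp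
  have Ymem: "y \<in> Y \<longleftrightarrow> (\<forall>i. 0 \<le> y $ i \<and> y $ i \<le> ymax)" for y
    by (simp add: Y_def Ybox_def)
  have zeroY: "0 \<in> Y" using ymax_pos by (simp add: Ymem)
  then have Yne: "Y \<noteq> {}" by auto
  have Yl1: "l1 (y - y') \<le> real CARD('i) * ymax" if "y \<in> Y" "y' \<in> Y" for y y'
  proof -
    have "l1 (y - y') \<le> (\<Sum>i\<in>(UNIV::'i set). ymax)" unfolding l1_def
    proof (intro sum_mono)
      fix i
      have "0 \<le> y $ i" "y $ i \<le> ymax" "0 \<le> y' $ i" "y' $ i \<le> ymax" using that by (auto simp: Ymem)
      then show "\<bar>(y - y') $ i\<bar> \<le> ymax" by (simp add: abs_le_iff)
    qed
    then show ?thesis by simp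
  qed
  obtain K where K: "\<And>x. x \<in> X \<Longrightarrow> norm x \<le> K"
    using compact_imp_bounded[OF X_compact] by (auto simp: bounded_iff)
  have bddX: "bdd_above (l1 ` X)"
  proof (rule bdd_aboveI2[where M="real CARD('d) * K"])
    fix x assume "x \<in> X"
    then show "l1 x \<le> real CARD('d) * K" using l1_le_norm[of x] K[of x]
      by (meson mult_left_mono of_nat_0_le_iff order_trans)
  qed
  have xmaxX: "l1 x \<le> xmax" if "x \<in> X" for x
    unfolding xmax_def using bddX that by (rule cSUP_upper2) simp
  obtain x00 where x00: "x00 \<in> X" using X_ne by auto
  have xmax_nonneg: "0 \<le> xmax" using xmaxX[OF x00] l1_nonneg[of x00] by linarith
  have Xl1: "l1 (x - x') \<le> 2 * xmax" if "x \<in> X" "x' \<in> X" for x x'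
    using l1_add[of x "- x'"] xmaxX[OF that(1)] xmaxX[OF that(2)]
    by (simp add: l1_def)
  define Bnd where "Bnd n = \<bar>Lb n x00 0\<bar> + G * (2 * xmax + real CARD('i) * ymax)" for n
  have Lb_bnd: "\<bar>Lb n x y\<bar> \<le> Bnd n" if "n \<ge> 1" "x \<in> X" "y \<in> Y" for n x y
  proof -
    have "\<bar>Lb n x y - Lb n x00 y\<bar> \<le> G * l1 (x - x00)"
      using G_lip_x[OF that(1) that(3)] that x00 by (auto simp: l1_lipschitz_on_def)
    also have "\<dots> \<le> G * (2 * xmax)" using Xl1[OF that(2) x00] G_pos by simp
    finally have 1: "\<bar>Lb n x y - Lb n x00 y\<bar> \<le> G * (2 * xmax)" .
    have "\<forall>u\<in>Y. \<forall>v\<in>Y. \<bar>Lb n x00 u - Lb n x00 v\<bar> \<le> G * l1 (u - v)"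
      using G_lip_y[OF that(1) x00] by (simp add: l1_lipschitz_on_def)
    then have "\<bar>Lb n x00 y - Lb n x00 0\<bar> \<le> G * l1 (y - 0)"
      using that(3) zeroY by blast
    also have "\<dots> \<le> G * (real CARD('i) * ymax)" using Yl1[OF that(3) zeroY] G_pos by simp
    finally have 2: "\<bar>Lb n x00 y - Lb n x00 0\<bar> \<le> G * (real CARD('i) * ymax)" .
    show ?thesis using 1 2 unfolding Bnd_def by (simp add: algebra_simps)
  qed
  define F where "F s x y = (\<Sum>n\<in>{1..<s}. Lb n x y)" for s x y
  define SB where "SB s = (\<Sum>n\<in>{1..<s}. Bnd n)" for s
  have F_bnd: "\<bar>F s x y\<bar> \<le> SB s" if "x \<in> X" "y \<in> Y" for s x y
    unfolding F_def SB_def using that Lb_bnd by (intro order_trans[OF sum_abs] sum_mono) auto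
  have F_Suc: "F (n + 1) x y = F n x y + Lb n x y" if "n \<ge> 1" for n x y
    using that by (simp add: F_def)
  define W where "W s \<theta>' = minmax (\<lambda>x y. F s x y - inner \<theta>' x) X Y" for s \<theta>'
  have h_bnd: "\<bar>F s x y - inner \<theta>' x\<bar> \<le> SB s + l1 \<theta>' * xmax" if "x \<in> X" "y \<in> Y" for s \<theta>' x y
  proof -
    have "\<bar>inner \<theta>' x\<bar> \<le> l1 \<theta>' * l1 x" using inner_le_sumabs[of \<theta>' x] by (simp add: l1_def)
    also have "\<dots> \<le> l1 \<theta>' * xmax" using xmaxX[OF that(1)] l1_nonneg[of \<theta>'] by (simp add: mult_left_mono)
    finally show ?thesis using F_bnd[OF that, of s] by linarith
  qed
  have W_lip: "\<bar>W s \<theta>1 - W s \<theta>2\<bar> \<le> l1 (\<theta>1 - \<theta>2) * xmax" for s \<theta>1 \<theta>2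
    unfolding W_def
  proof (rule minmax_diff_bound[OF X_ne Yne])
    fix x y assume xy: "x \<in> X" "y \<in> Y"
    show "\<bar>F s x y - inner \<theta>1 x\<bar> \<le> SB s + (l1 \<theta>1 + l1 \<theta>2) * xmax"
      using h_bnd[OF xy, of s \<theta>1] xmax_nonneg l1_nonneg[of \<theta>2] by (smt (verit) distrib_right mult_nonneg_nonneg)
    show "\<bar>F s x y - inner \<theta>2 x\<bar> \<le> SB s + (l1 \<theta>1 + l1 \<theta>2) * xmax"
      using h_bnd[OF xy, of s \<theta>2] xmax_nonneg l1_nonneg[of \<theta>1] by (smt (verit) distrib_right mult_nonneg_nonneg)
    have "\<bar>inner (\<theta>1 - \<theta>2) x\<bar> \<le> l1 (\<theta>1 - \<theta>2) * l1 x" using inner_le_sumabs[of "\<theta>1 - \<theta>2" x] by (simp add: l1_def)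
    also have "\<dots> \<le> l1 (\<theta>1 - \<theta>2) * xmax" using xmaxX[OF xy(1)] l1_nonneg[of "\<theta>1 - \<theta>2"] by (simp add: mult_left_mono)
    finally show "\<bar>(F s x y - inner \<theta>1 x) - (F s x y - inner \<theta>2 x)\<bar> \<le> l1 (\<theta>1 - \<theta>2) * xmax"
      by (simp add: inner_diff_left abs_minus_commute)
  qed
  have W_meas: "W s \<in> borel_measurable borel" for s
  proof (rule borel_measurable_continuous_onI)
    have "(real CARD('d) * xmax)-lipschitz_on UNIV (W s)"
    proof (rule lipschitz_onI)
      fix \<theta>1 \<theta>2 :: "real ^ 'd"
      have "dist (W s \<theta>1) (W s \<theta>2) \<le> l1 (\<theta>1 - \<theta>2) * xmax" using W_lip by (simp add: dist_real_def)
      also have "\<dots> \<le> (real CARD('d) * norm (\<theta>1 - \<theta>2)) * xmax"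
        using l1_le_norm[of "\<theta>1 - \<theta>2"] xmax_nonneg by (rule mult_right_mono)
      finally show "dist (W s \<theta>1) (W s \<theta>2) \<le> real CARD('d) * xmax * dist \<theta>1 \<theta>2"
        by (simp add: dist_norm algebra_simps)
    qed (use xmax_nonneg in simp)
    then show "continuous_on UNIV (W s)" by (rule lipschitz_on_continuous_on)
  qed
  have W_bnd: "\<bar>W s \<theta>'\<bar> \<le> SB s + l1 \<theta>' * xmax" for s \<theta>'
    unfolding W_def by (rule minmax_abs_bound[OF X_ne Yne h_bnd])
  define a where "a = ln (real CARD('d)) / \<eta>"
  have a_nonneg: "0 \<le> a" unfolding a_def using eta_pos by simp
  define Nf where "Nf \<theta>' = a + (\<Sum>j\<in>UNIV. max (\<bar>\<theta>' $ j\<bar> - a) 0)" for \<theta>' :: "real ^ 'd"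
  have inner_N: "\<bar>inner \<theta>' x\<bar> \<le> Nf \<theta>' * xmax" if "x \<in> X" for \<theta>' x
  proof -
    have N0: "0 \<le> Nf \<theta>'" unfolding Nf_def using a_nonneg by (intro add_nonneg_nonneg sum_nonneg) auto
    have "\<bar>inner \<theta>' x\<bar> \<le> Nf \<theta>' * l1 x" unfolding Nf_def by (rule inner_le_N[OF a_nonneg])
    also have "\<dots> \<le> Nf \<theta>' * xmax" using xmaxX[OF that] N0 by (rule mult_left_mono)
    finally show ?thesis .
  qed
  have W_t: "\<bar>W t \<theta>' - minmax (\<lambda>x y. \<Sum>n\<in>{1..<t}. Lb n x y) X Y\<bar> \<le> Nf \<theta>' * xmax" for \<theta>'
    unfolding W_def
  proof (rule minmax_diff_bound[OF X_ne Yne, where B="SB t + l1 \<theta>' * xmax"])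
    fix x y assume xy: "x \<in> X" "y \<in> Y"
    show "\<bar>F t x y - inner \<theta>' x\<bar> \<le> SB t + l1 \<theta>' * xmax" by (rule h_bnd[OF xy])
    show "\<bar>\<Sum>n\<in>{1..<t}. Lb n x y\<bar> \<le> SB t + l1 \<theta>' * xmax"
      using F_bnd[OF xy, of t] xmax_nonneg l1_nonneg[of \<theta>'] unfolding F_def
      by (smt (verit) mult_nonneg_nonneg)
    show "\<bar>(F t x y - inner \<theta>' x) - (\<Sum>n\<in>{1..<t}. Lb n x y)\<bar> \<le> Nf \<theta>' * xmax"
      using inner_N[OF xy(1), of \<theta>'] by (simp add: F_def)
  qed
  have W_1: "\<bar>W 1 \<theta>'\<bar> \<le> Nf \<theta>' * xmax" for \<theta>'
    unfolding W_def
  proof (rule minmax_abs_bound[OF X_ne Yne])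
    fix x y assume xy: "x \<in> X" "y \<in> Y"
    show "\<bar>F 1 x y - inner \<theta>' x\<bar> \<le> Nf \<theta>' * xmax" using inner_N[OF xy(1), of \<theta>'] by (simp add: F_def)
  qed
  have th_meas_j: "(\<lambda>\<omega>. \<theta> r \<omega> $ j) \<in> borel_measurable M" if "r \<ge> 1" for r j
    using \<theta>_exp[OF that, of j] by (simp add: distributed_def)
  have th_meas: "\<theta> r \<in> borel_measurable M" if "r \<ge> 1" for r
    by (rule vec_borel_measurable[OF th_meas_j[OF that]])
  have th_int_j: "integrable M (\<lambda>\<omega>. \<theta> r \<omega> $ j)" if "r \<ge> 1" for r j
    using erlang_ith_moment_integrable[OF eta_pos \<theta>_exp[OF that, of j], of 1] by simp
  have th_int_l1: "integrable M (\<lambda>\<omega>. l1 (\<theta> r \<omega>))" if "r \<ge> 1" for r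
    unfolding l1_def by (intro Bochner_Integration.integrable_sum integrable_abs th_int_j[OF that])
  have W_int: "integrable M (\<lambda>\<omega>. W s (\<theta> r \<omega>))" if "r \<ge> 1" for s r
  proof (rule Bochner_Integration.integrable_bound)
    show "integrable M (\<lambda>\<omega>. SB s + l1 (\<theta> r \<omega>) * xmax)"
      by (intro Bochner_Integration.integrable_add integrable_const integrable_mult_left th_int_l1[OF that])
    show "(\<lambda>\<omega>. W s (\<theta> r \<omega>)) \<in> borel_measurable M"
      using measurable_compose[OF th_meas[OF that] W_meas] .
    have "SB s \<ge> 0" unfolding SB_def Bnd_def using G_pos xmax_nonneg ymax_pos
      by (intro sum_nonneg add_nonneg_nonneg mult_nonneg_nonneg) auto
    then show "AE \<omega> in M. norm (W s (\<theta> r \<omega>)) \<le> norm (SB s + l1 (\<theta> r \<omega>) * xmax)"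
      using W_bnd l1_nonneg xmax_nonneg by (auto intro!: AE_I2) (smt (verit) mult_nonneg_nonneg)
  qed
  define EW where "EW s = (\<integral>\<omega>. W s (\<theta> 1 \<omega>) \<partial>M)" for s
  have W_E: "(\<integral>\<omega>. W s (\<theta> r \<omega>) \<partial>M) = EW s" if "r \<ge> 1" for s r
    unfolding EW_def
    using theta_integral[OF M_prob eta_pos \<theta>_exp \<theta>_indep that W_meas[of s]]
      theta_integral[OF M_prob eta_pos \<theta>_exp \<theta>_indep order_refl W_meas[of s]] by (simp only:)
  have max_int: "integrable M (\<lambda>\<omega>. max (\<bar>\<theta> r \<omega> $ j\<bar> - a) 0)"
    and max_E: "(\<integral>\<omega>. max (\<bar>\<theta> r \<omega> $ j\<bar> - a) 0 \<partial>M) = exp (- a * \<eta>) / \<eta>" if "r \<ge> 1" for r j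
    using exp_shift_integral[OF M_prob eta_pos a_nonneg \<theta>_exp[OF that, of j]] by auto
  have N_int: "integrable M (\<lambda>\<omega>. Nf (\<theta> r \<omega>))" if "r \<ge> 1" for r
    unfolding Nf_def by (intro Bochner_Integration.integrable_add integrable_const Bochner_Integration.integrable_sum max_int[OF that])
  have eta_inv: "1 / \<eta> = real T powr (2/3)"
  proof -
    have e: "real T powr (-2/3) = inverse (real T powr (2/3))"
      using powr_minus[of "real T" "2/3"] by (simp only: minus_divide_left)
    show ?thesis unfolding \<eta>_def e by (simp only: divide_inverse inverse_inverse_eq mult_1_left)
  qed
  have N_E: "(\<integral>\<omega>. Nf (\<theta> r \<omega>) \<partial>M) = (ln (real CARD('d)) + 1) * real T powr (2/3)" if "r \<ge> 1" for r
  proof -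
    have Si: "integrable M (\<lambda>x. \<Sum>j\<in>UNIV. max (\<bar>\<theta> r x $ j\<bar> - a) 0)"
      by (intro Bochner_Integration.integrable_sum max_int[OF that])
    have "(\<integral>\<omega>. Nf (\<theta> r \<omega>) \<partial>M) = (\<integral>\<omega>. a \<partial>M) + (\<integral>\<omega>. (\<Sum>j\<in>UNIV. max (\<bar>\<theta> r \<omega> $ j\<bar> - a) 0) \<partial>M)"
      unfolding Nf_def by (rule Bochner_Integration.integral_add[OF integrable_const Si])
    also have "(\<integral>\<omega>. (\<Sum>j\<in>UNIV. max (\<bar>\<theta> r \<omega> $ j\<bar> - a) 0) \<partial>M) = (\<Sum>j\<in>UNIV. (\<integral>\<omega>. max (\<bar>\<theta> r \<omega> $ j\<bar> - a) 0 \<partial>M))"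
      by (rule Bochner_Integration.integral_sum) (rule max_int[OF that])
    finally have "(\<integral>\<omega>. Nf (\<theta> r \<omega>) \<partial>M) = a + (\<Sum>j\<in>(UNIV::'d set). exp (- a * \<eta>) / \<eta>)"
      by (simp add: max_E[OF that] prob_space)
    also have "exp (- a * \<eta>) = 1 / real CARD('d)"
      unfolding a_def using eta_pos by (simp add: exp_minus inverse_eq_divide)
    finally have "(\<integral>\<omega>. Nf (\<theta> r \<omega>) \<partial>M) = ln (real CARD('d)) / \<eta> + 1 / \<eta>"
      by (simp add: a_def)
    also have "\<dots> = (ln (real CARD('d)) + 1) * (1 / \<eta>)" by (simp add: add_divide_distrib)
    finally show ?thesis by (simp add: eta_inv)
  qed
  have lipx: "\<bar>Lb n u y - Lb n v y\<bar> \<le> G * l1 (u - v)" if "n \<ge> 1" "y \<in> Y" "u \<in> X" "v \<in> X" for n u v y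
    using G_lip_x[OF that(1,2)] that(3,4) unfolding l1_lipschitz_on_def by blast
  have lipy: "\<bar>Lb n x u - Lb n x v\<bar> \<le> G * l1 (u - v)" if "n \<ge> 1" "x \<in> X" "u \<in> Y" "v \<in> Y" for n x u v
    using G_lip_y[OF that(1,2)] that(3,4) unfolding l1_lipschitz_on_def by blast
  have gm: "global_minimax_point (\<lambda>x y. F s x y - inner (\<theta> s \<omega>) x) X Y (xs s \<omega>) (ys s \<omega>)"
    if "s \<ge> 1" "\<omega> \<in> space M" for s \<omega>
    using minimax[OF that] by (simp add: F_def)
  have xsX: "xs s \<omega> \<in> X" and ysY: "ys s \<omega> \<in> Y" if "s \<ge> 1" "\<omega> \<in> space M" for s \<omega>
    using gm[OF that] by (auto simp: global_minimax_point_def)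
  have gm_le: "F s (xs s \<omega>) y - inner (\<theta> s \<omega>) (xs s \<omega>) \<le> F s (xs s \<omega>) (ys s \<omega>) - inner (\<theta> s \<omega>) (xs s \<omega>)"
    if "s \<ge> 1" "\<omega> \<in> space M" "y \<in> Y" for s \<omega> y
    using gm[OF that(1,2)] that(3) unfolding global_minimax_point_def by blast
  have W_at: "W s (\<theta> s \<omega>) = F s (xs s \<omega>) (ys s \<omega>) - inner (\<theta> s \<omega>) (xs s \<omega>)"
    if "s \<ge> 1" "\<omega> \<in> space M" for s \<omega>
    unfolding W_def by (rule minmax_at_point[OF gm[OF that]])
  have ys'Y: "ys' s \<omega> \<in> Y" and ys'max: "\<And>y. y \<in> Y \<Longrightarrow> F (s+1) (xs s \<omega>) y \<le> F (s+1) (xs s \<omega>) (ys' s \<omega>)"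
    if "s \<ge> 1" "\<omega> \<in> space M" for s \<omega>
    using ys'_def[OF that] by (auto simp: is_argmax_on_def F_def)
  have ys''Y: "ys'' s \<omega> \<in> Y" and ys''max: "\<And>y. y \<in> Y \<Longrightarrow> F s (xs (s+1) \<omega>) y \<le> F s (xs (s+1) \<omega>) (ys'' s \<omega>)"
    if "s \<ge> 1" "\<omega> \<in> space M" for s \<omega>
    using ys''_def[OF that] by (auto simp: is_argmax_on_def F_def)
  have W_le: "W s \<theta>' \<le> F s x yy - inner \<theta>' x"
    if "x \<in> X" "yy \<in> Y" "\<And>y. y \<in> Y \<Longrightarrow> F s x y \<le> F s x yy" for s \<theta>' x yy
  proof -
    have "W s \<theta>' \<le> (SUP y\<in>Y. F s x y - inner \<theta>' x)"
      unfolding W_def by (rule minmax_le_SUP[OF Yne h_bnd that(1)])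
    also have "\<dots> = F s x yy - inner \<theta>' x"
      by (rule SUP_eq_max_at[OF that(2)]) (use that(3) in auto)
    finally show ?thesis .
  qed
  have I1: "Lb n (xs n \<omega>) (ys n \<omega>) \<le> G * (l1 (xs n \<omega> - xs (n+1) \<omega>) + l1 (ys n \<omega> - ys (n+1) \<omega>)
      + l1 (ys'' n \<omega> - ys (n+1) \<omega>)) + (W (n+1) (\<theta> (n+1) \<omega>) - W n (\<theta> (n+1) \<omega>))"
    if n: "n \<ge> 1" and \<omega>: "\<omega> \<in> space M" for n \<omega>
  proof -
    have n1: "n + 1 \<ge> 1" by simp
    note x0 = xsX[OF n \<omega>] and y0 = ysY[OF n \<omega>] and x1 = xsX[OF n1 \<omega>] and y1 = ysY[OF n1 \<omega>]
      and yy = ys''Y[OF n \<omega>]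
    have a: "W (n+1) (\<theta> (n+1) \<omega>) = F (n+1) (xs (n+1) \<omega>) (ys (n+1) \<omega>) - inner (\<theta> (n+1) \<omega>) (xs (n+1) \<omega>)"
      by (rule W_at[OF n1 \<omega>])
    have b: "W n (\<theta> (n+1) \<omega>) \<le> F n (xs (n+1) \<omega>) (ys'' n \<omega>) - inner (\<theta> (n+1) \<omega>) (xs (n+1) \<omega>)"
      by (rule W_le[OF x1 yy ys''max[OF n \<omega>]])
    have c: "F (n+1) (xs (n+1) \<omega>) (ys'' n \<omega>) - inner (\<theta> (n+1) \<omega>) (xs (n+1) \<omega>)
        \<le> F (n+1) (xs (n+1) \<omega>) (ys (n+1) \<omega>) - inner (\<theta> (n+1) \<omega>) (xs (n+1) \<omega>)"
      by (rule gm_le[OF n1 \<omega> yy])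
    have L1: "\<bar>Lb n (xs n \<omega>) (ys n \<omega>) - Lb n (xs (n+1) \<omega>) (ys n \<omega>)\<bar> \<le> G * l1 (xs n \<omega> - xs (n+1) \<omega>)"
      by (rule lipx[OF n y0 x0 x1])
    have L2: "\<bar>Lb n (xs (n+1) \<omega>) (ys n \<omega>) - Lb n (xs (n+1) \<omega>) (ys (n+1) \<omega>)\<bar> \<le> G * l1 (ys n \<omega> - ys (n+1) \<omega>)"
      by (rule lipy[OF n x1 y0 y1])
    have L3: "\<bar>Lb n (xs (n+1) \<omega>) (ys'' n \<omega>) - Lb n (xs (n+1) \<omega>) (ys (n+1) \<omega>)\<bar> \<le> G * l1 (ys'' n \<omega> - ys (n+1) \<omega>)"
      by (rule lipy[OF n x1 yy y1])
    show ?thesis using a b c L1 L2 L3 F_Suc[OF n, of "xs (n+1) \<omega>" "ys'' n \<omega>"] F_Suc[OF n, of "xs (n+1) \<omega>" "ys (n+1) \<omega>"]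
      by (simp add: algebra_simps abs_le_iff)
  qed
  have I2: "W (n+1) (\<theta> n \<omega>) - W n (\<theta> n \<omega>) \<le> Lb n (xs n \<omega>) (ys n \<omega>) + G * (l1 (ys n \<omega> - ys (n+1) \<omega>)
      + l1 (ys' n \<omega> - ys (n+1) \<omega>))"
    if n: "n \<ge> 1" and \<omega>: "\<omega> \<in> space M" for n \<omega>
  proof -
    have n1: "n + 1 \<ge> 1" by simp
    note x0 = xsX[OF n \<omega>] and y0 = ysY[OF n \<omega>] and y1 = ysY[OF n1 \<omega>] and yp = ys'Y[OF n \<omega>]
    have a: "W n (\<theta> n \<omega>) = F n (xs n \<omega>) (ys n \<omega>) - inner (\<theta> n \<omega>) (xs n \<omega>)"
      by (rule W_at[OF n \<omega>])
    have b: "F n (xs n \<omega>) (ys' n \<omega>) - inner (\<theta> n \<omega>) (xs n \<omega>) \<le> F n (xs n \<omega>) (ys n \<omega>) - inner (\<theta> n \<omega>) (xs n \<omega>)"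
      by (rule gm_le[OF n \<omega> yp])
    have c: "W (n+1) (\<theta> n \<omega>) \<le> F (n+1) (xs n \<omega>) (ys' n \<omega>) - inner (\<theta> n \<omega>) (xs n \<omega>)"
      by (rule W_le[OF x0 yp ys'max[OF n \<omega>]])
    have L: "\<bar>Lb n (xs n \<omega>) (ys' n \<omega>) - Lb n (xs n \<omega>) (ys n \<omega>)\<bar> \<le> G * l1 (ys' n \<omega> - ys n \<omega>)"
      by (rule lipy[OF n x0 yp y0])
    have T: "l1 (ys' n \<omega> - ys n \<omega>) \<le> l1 (ys' n \<omega> - ys (n+1) \<omega>) + l1 (ys n \<omega> - ys (n+1) \<omega>)"
      using l1_triangle[of "ys' n \<omega>" "ys n \<omega>" "ys (n+1) \<omega>"] l1_commute[of "ys (n+1) \<omega>" "ys n \<omega>"] by simp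
    have "G * l1 (ys' n \<omega> - ys n \<omega>) \<le> G * (l1 (ys' n \<omega> - ys (n+1) \<omega>) + l1 (ys n \<omega> - ys (n+1) \<omega>))"
      using T G_pos by (intro mult_left_mono) auto
    then show ?thesis using a b c L F_Suc[OF n, of "xs n \<omega>" "ys' n \<omega>"]
      by (simp add: algebra_simps abs_le_iff)
  qed
  have ysm: "ys s \<in> borel_measurable M" "xs s \<in> borel_measurable M" "ys' s \<in> borel_measurable M"
    "ys'' s \<in> borel_measurable M" if "s \<ge> 1" for s using meas[OF that] by auto
  have fm: "finite_measure M" by unfold_locales
  have iD1: "integrable M (\<lambda>\<omega>. l1 (xs n \<omega> - xs (n+1) \<omega>))" if "n \<ge> 1" for n
    using that by (intro l1_diff_integrable[OF fm, where C="2 * xmax"] ysm Xl1 xsX) auto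
  have iD2: "integrable M (\<lambda>\<omega>. l1 (ys n \<omega> - ys (n+1) \<omega>))" if "n \<ge> 1" for n
    using that by (intro l1_diff_integrable[OF fm, where C="real CARD('i) * ymax"] ysm Yl1 ysY) auto
  have iD3: "integrable M (\<lambda>\<omega>. l1 (ys'' n \<omega> - ys (n+1) \<omega>))" if "n \<ge> 1" for n
    using that by (intro l1_diff_integrable[OF fm, where C="real CARD('i) * ymax"] ysm Yl1 ysY ys''Y) auto
  have iD4: "integrable M (\<lambda>\<omega>. l1 (ys' n \<omega> - ys (n+1) \<omega>))" if "n \<ge> 1" for n
    using that by (intro l1_diff_integrable[OF fm, where C="real CARD('i) * ymax"] ysm Yl1 ysY ys'Y) auto
  let ?mm = "minmax (\<lambda>x y. \<Sum>n\<in>{1..<t}. Lb n x y) X Y"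
  have Wt_le: "W t \<theta>' \<le> ?mm + Nf \<theta>' * xmax" and Wt_ge: "?mm - Nf \<theta>' * xmax \<le> W t \<theta>'" for \<theta>'
    using W_t[of \<theta>'] by (simp_all add: abs_le_iff)
  have EW_t_up: "EW t \<le> ?mm + (ln (real CARD('d)) + 1) * real T powr (2/3) * xmax"
  proof -
    have "EW t = (\<integral>\<omega>. W t (\<theta> t \<omega>) \<partial>M)" using W_E[OF t_pos] by simp
    also have "\<dots> \<le> (\<integral>\<omega>. ?mm + Nf (\<theta> t \<omega>) * xmax \<partial>M)"
      using Wt_le by (intro integral_mono W_int[OF t_pos] Bochner_Integration.integrable_add integrable_const
          integrable_mult_left N_int[OF t_pos]) auto
    also have "\<dots> = ?mm + (ln (real CARD('d)) + 1) * real T powr (2/3) * xmax"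
      using N_int[OF t_pos] N_E[OF t_pos] by (simp add: prob_space)
    finally show ?thesis .
  qed
  have EW_t_lo: "?mm - (ln (real CARD('d)) + 1) * real T powr (2/3) * xmax \<le> EW t"
  proof -
    have "?mm - (ln (real CARD('d)) + 1) * real T powr (2/3) * xmax = (\<integral>\<omega>. ?mm - Nf (\<theta> t \<omega>) * xmax \<partial>M)"
      using N_int[OF t_pos] N_E[OF t_pos] by (simp add: prob_space)
    also have "\<dots> \<le> (\<integral>\<omega>. W t (\<theta> t \<omega>) \<partial>M)"
      using Wt_ge by (intro integral_mono W_int[OF t_pos] Bochner_Integration.integrable_diff integrable_const
          integrable_mult_left N_int[OF t_pos]) auto
    also have "\<dots> = EW t" using W_E[OF t_pos] by simp
    finally show ?thesis .
  qed
  have EW_1: "\<bar>EW 1\<bar> \<le> (ln (real CARD('d)) + 1) * real T powr (2/3) * xmax"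
  proof -
    have "\<bar>EW 1\<bar> \<le> (\<integral>\<omega>. \<bar>W 1 (\<theta> 1 \<omega>)\<bar> \<partial>M)" unfolding EW_def by (rule integral_abs_bound)
    also have "\<dots> \<le> (\<integral>\<omega>. Nf (\<theta> 1 \<omega>) * xmax \<partial>M)"
      using W_1 by (intro integral_mono integrable_abs W_int integrable_mult_left N_int) auto
    also have "\<dots> = (ln (real CARD('d)) + 1) * real T powr (2/3) * xmax"
      using N_E[of 1] by simp
    finally show ?thesis .
  qed
  have tele: "(\<Sum>n\<in>{1..<t}. EW (n+1) - EW n) = EW t - EW 1"
    using sum_Suc_diff'[OF t_pos, of EW] by simp
  have lnd: "0 \<le> ln (real CARD('d))" by simp
  have Tp: "0 \<le> real T powr (2/3)" by simp
  have Cnn: "0 \<le> 2 * real T powr (2/3) * (ln (real CARD('d)) + 1) * xmax"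
    using lnd Tp xmax_nonneg by simp
  let ?C = "2 * real T powr (2/3) * (ln (real CARD('d)) + 1) * xmax"
  let ?EN = "(ln (real CARD('d)) + 1) * real T powr (2/3) * xmax"
  have ENC: "2 * ?EN = ?C" by (simp add: algebra_simps)
  define Q1 where "Q1 n \<omega> = G * (l1 (xs n \<omega> - xs (n+1) \<omega>) + l1 (ys n \<omega> - ys (n+1) \<omega>)
      + l1 (ys'' n \<omega> - ys (n+1) \<omega>)) + (W (n+1) (\<theta> (n+1) \<omega>) - W n (\<theta> (n+1) \<omega>))" for n \<omega>
  define Q2 where "Q2 n \<omega> = (W (n+1) (\<theta> n \<omega>) - W n (\<theta> n \<omega>)) - G * (l1 (ys n \<omega> - ys (n+1) \<omega>)
      + l1 (ys' n \<omega> - ys (n+1) \<omega>))" for n \<omega>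
  have Q1_int: "integrable M (Q1 n)" if "n \<ge> 1" for n
    unfolding Q1_def[abs_def] using that
    by (intro Bochner_Integration.integrable_add Bochner_Integration.integrable_diff integrable_mult_right
        iD1 iD2 iD3 W_int) auto
  have Q2_int: "integrable M (Q2 n)" if "n \<ge> 1" for n
    unfolding Q2_def[abs_def] using that
    by (intro Bochner_Integration.integrable_add Bochner_Integration.integrable_diff integrable_mult_right
        iD2 iD4 W_int) auto
  have Q1_E: "(\<integral>\<omega>. Q1 n \<omega> \<partial>M) = G * ((\<integral>\<omega>. l1 (xs n \<omega> - xs (n+1) \<omega>) \<partial>M) + (\<integral>\<omega>. l1 (ys n \<omega> - ys (n+1) \<omega>) \<partial>M)
      + (\<integral>\<omega>. l1 (ys'' n \<omega> - ys (n+1) \<omega>) \<partial>M)) + (EW (n+1) - EW n)" if n: "n \<ge> 1" for n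
  proof -
    have n1: "n + 1 \<ge> 1" by simp
    show ?thesis unfolding Q1_def
      using iD1[OF n] iD2[OF n] iD3[OF n] W_int[OF n1, of "n+1"] W_int[OF n1, of n] W_E[OF n1, of "n+1"] W_E[OF n1, of n]
      by (simp add: Bochner_Integration.integral_add Bochner_Integration.integral_diff
          Bochner_Integration.integrable_add Bochner_Integration.integrable_diff)
  qed
  have Q2_E: "(\<integral>\<omega>. Q2 n \<omega> \<partial>M) = (EW (n+1) - EW n) - G * ((\<integral>\<omega>. l1 (ys n \<omega> - ys (n+1) \<omega>) \<partial>M)
      + (\<integral>\<omega>. l1 (ys' n \<omega> - ys (n+1) \<omega>) \<partial>M))" if n: "n \<ge> 1" for n
    unfolding Q2_def
    using iD2[OF n] iD4[OF n] W_int[OF n, of "n+1"] W_int[OF n, of n] W_E[OF n, of "n+1"] W_E[OF n, of n]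
    by (simp add: Bochner_Integration.integral_add Bochner_Integration.integral_diff
        Bochner_Integration.integrable_add Bochner_Integration.integrable_diff)
  have D_nonneg: "0 \<le> (\<integral>\<omega>. l1 (U \<omega>) \<partial>M)" for U :: "'w \<Rightarrow> real ^ 'd"
    by (intro Bochner_Integration.integral_nonneg l1_nonneg)
  have D_nonneg': "0 \<le> (\<integral>\<omega>. l1 (U \<omega>) \<partial>M)" for U :: "'w \<Rightarrow> real ^ 'i"
    by (intro Bochner_Integration.integral_nonneg l1_nonneg)
  have part1: "(\<integral>\<omega>. (\<Sum>n\<in>{1..<t}. Lb n (xs n \<omega>) (ys n \<omega>)) - ?mm \<partial>M)
       \<le> G * (\<Sum>n\<in>{1..<t}. (\<integral>\<omega>. l1 (xs n \<omega> - xs (n+1) \<omega>) \<partial>M)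
                             + (\<integral>\<omega>. l1 (ys n \<omega> - ys (n+1) \<omega>) \<partial>M)
                             + (\<integral>\<omega>. l1 (ys'' n \<omega> - ys (n+1) \<omega>) \<partial>M)) + ?C"
    (is "?L \<le> G * ?S + ?C")
  proof -
    have S0: "0 \<le> ?S" using D_nonneg D_nonneg' by (intro sum_nonneg add_nonneg_nonneg) auto
    show ?thesis
    proof (cases "integrable M (\<lambda>\<omega>. (\<Sum>n\<in>{1..<t}. Lb n (xs n \<omega>) (ys n \<omega>)) - ?mm)")
      case False
      then have "?L = 0" by (rule not_integrable_integral_eq)
      then show ?thesis using S0 G_pos Cnn by simp
    next
      case True
      have "?L \<le> (\<integral>\<omega>. (\<Sum>n\<in>{1..<t}. Q1 n \<omega>) - ?mm \<partial>M)"
      proof (rule integral_mono[OF True])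
        show "integrable M (\<lambda>\<omega>. (\<Sum>n\<in>{1..<t}. Q1 n \<omega>) - ?mm)"
          by (intro Bochner_Integration.integrable_diff Bochner_Integration.integrable_sum integrable_const Q1_int) auto
        fix \<omega> assume "\<omega> \<in> space M"
        then show "(\<Sum>n\<in>{1..<t}. Lb n (xs n \<omega>) (ys n \<omega>)) - ?mm \<le> (\<Sum>n\<in>{1..<t}. Q1 n \<omega>) - ?mm"
          using I1 unfolding Q1_def by (intro diff_right_mono sum_mono) auto
      qed
      also have "\<dots> = (\<Sum>n\<in>{1..<t}. (\<integral>\<omega>. Q1 n \<omega> \<partial>M)) - ?mm"
      proof -
        have iS: "integrable M (\<lambda>\<omega>. \<Sum>n\<in>{1..<t}. Q1 n \<omega>)"
          by (intro Bochner_Integration.integrable_sum Q1_int) auto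
        have "(\<integral>\<omega>. (\<Sum>n\<in>{1..<t}. Q1 n \<omega>) - ?mm \<partial>M) = (\<integral>\<omega>. (\<Sum>n\<in>{1..<t}. Q1 n \<omega>) \<partial>M) - (\<integral>\<omega>. ?mm \<partial>M)"
          by (rule Bochner_Integration.integral_diff[OF iS integrable_const])
        also have "(\<integral>\<omega>. (\<Sum>n\<in>{1..<t}. Q1 n \<omega>) \<partial>M) = (\<Sum>n\<in>{1..<t}. (\<integral>\<omega>. Q1 n \<omega> \<partial>M))"
          by (rule Bochner_Integration.integral_sum) (intro Q1_int, auto)
        finally show ?thesis by (simp add: prob_space)
      qed
      also have "\<dots> = (\<Sum>n\<in>{1..<t}. G * ((\<integral>\<omega>. l1 (xs n \<omega> - xs (n+1) \<omega>) \<partial>M) + (\<integral>\<omega>. l1 (ys n \<omega> - ys (n+1) \<omega>) \<partial>M)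
      + (\<integral>\<omega>. l1 (ys'' n \<omega> - ys (n+1) \<omega>) \<partial>M)) + (EW (n+1) - EW n)) - ?mm"
        by (intro arg_cong2[where f="(-)"] sum.cong refl Q1_E) auto
      also have "\<dots> = G * ?S + (EW t - EW 1) - ?mm"
        by (simp only: sum.distrib sum_distrib_left[symmetric] tele)
      also have "\<dots> \<le> G * ?S + ?C" using EW_t_up EW_1 ENC by linarith
      finally show ?thesis .
    qed
  qed
  have part2: "(\<integral>\<omega>. ?mm - (\<Sum>n\<in>{1..<t}. Lb n (xs n \<omega>) (ys n \<omega>)) \<partial>M)
       \<le> G * (\<Sum>n\<in>{1..<t}. 2 * (\<integral>\<omega>. l1 (xs n \<omega> - xs (n+1) \<omega>) \<partial>M)
                             + (\<integral>\<omega>. l1 (ys n \<omega> - ys (n+1) \<omega>) \<partial>M)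
                             + (\<integral>\<omega>. l1 (ys' n \<omega> - ys (n+1) \<omega>) \<partial>M)) + ?C"
    (is "?L \<le> G * ?S + ?C")
  proof -
    let ?S' = "\<Sum>n\<in>{1..<t}. (\<integral>\<omega>. l1 (ys n \<omega> - ys (n+1) \<omega>) \<partial>M) + (\<integral>\<omega>. l1 (ys' n \<omega> - ys (n+1) \<omega>) \<partial>M)"
    have S0: "0 \<le> ?S" using D_nonneg D_nonneg' by (intro sum_nonneg add_nonneg_nonneg mult_nonneg_nonneg) auto
    have SS: "?S' \<le> ?S" using D_nonneg by (intro sum_mono) auto
    show ?thesis
    proof (cases "integrable M (\<lambda>\<omega>. ?mm - (\<Sum>n\<in>{1..<t}. Lb n (xs n \<omega>) (ys n \<omega>)))")
      case False
      then have "?L = 0" by (rule not_integrable_integral_eq)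
      then show ?thesis using S0 G_pos Cnn by simp
    next
      case True
      have "?L \<le> (\<integral>\<omega>. ?mm - (\<Sum>n\<in>{1..<t}. Q2 n \<omega>) \<partial>M)"
      proof (rule integral_mono[OF True])
        show "integrable M (\<lambda>\<omega>. ?mm - (\<Sum>n\<in>{1..<t}. Q2 n \<omega>))"
          by (intro Bochner_Integration.integrable_diff Bochner_Integration.integrable_sum integrable_const Q2_int) auto
        fix \<omega> assume "\<omega> \<in> space M"
        then show "?mm - (\<Sum>n\<in>{1..<t}. Lb n (xs n \<omega>) (ys n \<omega>)) \<le> ?mm - (\<Sum>n\<in>{1..<t}. Q2 n \<omega>)"
          using I2 unfolding Q2_def by (intro diff_left_mono sum_mono) (auto simp: algebra_simps)
      qed
      also have "\<dots> = ?mm - (\<Sum>n\<in>{1..<t}. (\<integral>\<omega>. Q2 n \<omega> \<partial>M))"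
      proof -
        have iS: "integrable M (\<lambda>\<omega>. \<Sum>n\<in>{1..<t}. Q2 n \<omega>)"
          by (intro Bochner_Integration.integrable_sum Q2_int) auto
        have "(\<integral>\<omega>. ?mm - (\<Sum>n\<in>{1..<t}. Q2 n \<omega>) \<partial>M) = (\<integral>\<omega>. ?mm \<partial>M) - (\<integral>\<omega>. (\<Sum>n\<in>{1..<t}. Q2 n \<omega>) \<partial>M)"
          by (rule Bochner_Integration.integral_diff[OF integrable_const iS])
        also have "(\<integral>\<omega>. (\<Sum>n\<in>{1..<t}. Q2 n \<omega>) \<partial>M) = (\<Sum>n\<in>{1..<t}. (\<integral>\<omega>. Q2 n \<omega> \<partial>M))"
          by (rule Bochner_Integration.integral_sum) (intro Q2_int, auto)
        finally show ?thesis by (simp add: prob_space)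
      qed
      also have "\<dots> = ?mm - (\<Sum>n\<in>{1..<t}. (EW (n+1) - EW n) - G * ((\<integral>\<omega>. l1 (ys n \<omega> - ys (n+1) \<omega>) \<partial>M)
      + (\<integral>\<omega>. l1 (ys' n \<omega> - ys (n+1) \<omega>) \<partial>M)))"
        by (intro arg_cong2[where f="(-)"] sum.cong refl Q2_E) auto
      also have "\<dots> = ?mm - (EW t - EW 1) + G * ?S'"
        by (subst sum_subtractf) (simp only: sum_distrib_left[symmetric] tele diff_diff_eq2 diff_add_eq)
      also have "\<dots> \<le> G * ?S + ?C" using EW_t_lo EW_1 ENC mult_left_mono[OF SS, of G] G_pos by linarith
      finally show ?thesis .
    qed
  qed
  show ?thesis using part1 part2 by blast
qed


end
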